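(* There exists a unique $C^*<0$ such that $u(C^* )=0$, and this $C^*$ is the unique maximizer of $v$ over $(-\infty,B^*]$.
   Context: $\Phi$ is the standard normal distribution function. $B^*\approx0.84$ is the unique positive solution of $\sqrt{2\pi}(1-B^2)e^{B^2/2}\Phi(B)=B$. For $C\le B^*$ define $$v(C):=\frac{1}{\Phi(-C)}\left[(1-(B^* )^2)\Phi(C)-C\frac{e^{-C^2/2}}{\sqrt{2\pi}}\right],$$ $$u(C):=1-(B^* )^2-(1-C^2)\Phi(-C)-\frac{C}{\sqrt{2\pi}}e^{-C^2/2}.$$ *)

theory Defs
  imports "HOL-Probability.Probability"
begin

definition Phi :: "real \<Rightarrow> real" where
  "Phi x = (LINT t:{..x}|lborel. std_normal_density t)"

definition Bstar :: real where
  "Bstar = (THE B. B > 0 \<and> sqrt (2*pi) * (1 - B\<^sup>2) * exp (B\<^sup>2 / 2) * Phi B = B)"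

definition v :: "real \<Rightarrow> real" where
  "v C = (1 / Phi (-C)) * ((1 - Bstar\<^sup>2) * Phi C - C * exp (- C\<^sup>2 / 2) / sqrt (2*pi))"

definition u :: "real \<Rightarrow> real" where
  "u C = 1 - Bstar\<^sup>2 - (1 - C\<^sup>2) * Phi (-C) - C / sqrt (2*pi) * exp (- C\<^sup>2 / 2)"

end

theory Submission imports Defs begin

abbreviation "phi \<equiv> std_normal_density"

lemma phi_integrable: "interval_lebesgue_integrable lborel a b phi"
  unfolding interval_lebesgue_integrable_def set_integrable_def
  using integrable_mult_indicator[of _ lborel phi]
  by (auto simp: integrable_normal_density)

lemma Phi_eq: "Phi x = (LBINT t=-\<infinity>..ereal x. phi t)"
proof -
  have "(LBINT t=-\<infinity>..ereal x. phi t) = (LBINT t : {t. -\<infinity> < ereal t \<and> ereal t \<le> ereal x}. phi t)"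
    by (rule interval_integral_Ioc') simp
  also have "{t. -\<infinity> < ereal t \<and> ereal t \<le> ereal x} = {..x}" by auto
  finally show ?thesis unfolding Phi_def by simp
qed

lemma phi_even: "phi (-x) = phi x"
  by (simp add: std_normal_density_def)

lemma Phi_neg: "Phi (-x) = 1 - Phi x"
proof -
  have "Phi (-x) = (LBINT t=-\<infinity>..ereal (-x). phi t)" by (rule Phi_eq)
  also have "\<dots> = (LBINT t=ereal x..\<infinity>. phi (-t))"
    by (subst interval_integral_reflect) simp
  also have "\<dots> = (LBINT t=ereal x..\<infinity>. phi t)" by (simp add: phi_even)
  finally have 1: "Phi (-x) = (LBINT t=ereal x..\<infinity>. phi t)" .
  have "(LBINT t=-\<infinity>..ereal x. phi t) + (LBINT t=ereal x..\<infinity>. phi t) = (LBINT t=-\<infinity>..\<infinity>. phi t)"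
    by (rule interval_integral_sum) (rule phi_integrable)
  also have "\<dots> = 1"
    by (simp add: interval_lebesgue_integral_def set_lebesgue_integral_def)
  finally show ?thesis using 1 Phi_eq[of x] by simp
qed

lemma Phi_0: "Phi 0 = 1/2"
  using Phi_neg[of 0] by simp

lemma Phi_split: "Phi y = Phi 0 + (LBINT t=ereal 0..ereal y. phi t)"
proof -
  have "(LBINT t=-\<infinity>..ereal 0. phi t) + (LBINT t=ereal 0..ereal y. phi t) = (LBINT t=-\<infinity>..ereal y. phi t)"
    by (rule interval_integral_sum) (rule phi_integrable)
  then show ?thesis using Phi_eq[of y] Phi_eq[of 0] by simp
qed

lemma Phi_deriv: "(Phi has_real_derivative phi x) (at x)"
proof -
  define a where "a = min x 0 - 1"
  define b where "b = max x 0 + 1"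
  have cont: "continuous_on {a..b} phi"
    unfolding std_normal_density_def by (intro continuous_intros) auto
  have "((\<lambda>u. LBINT y=ereal 0..ereal u. phi y) has_vector_derivative (phi x)) (at x within {a..b})"
    by (rule interval_integral_FTC2[OF _ _ cont, of 0]) (auto simp: a_def b_def)
  moreover have "at x within {a..b} = at x"
    by (rule at_within_Icc_at) (auto simp: a_def b_def)
  ultimately have "((\<lambda>u. LBINT y=ereal 0..ereal u. phi y) has_real_derivative (phi x)) (at x)"
    by (simp add: has_real_derivative_iff_has_vector_derivative)
  then have "((\<lambda>u. Phi 0 + (LBINT y=ereal 0..ereal u. phi y)) has_real_derivative (phi x)) (at x)"
    by (auto intro!: derivative_eq_intros)
  then show ?thesis
    by (subst (asm) Phi_split[symmetric]) simp
qed

lemma phi_pos: "0 < phi x" by (simp add: normal_density_pos)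

lemma Phi_deriv_chain[derivative_intros]:
  "(g has_real_derivative g') (at x within s) \<Longrightarrow>
   ((\<lambda>x. Phi (g x)) has_real_derivative (phi (g x) * g')) (at x within s)"
  by (rule DERIV_chain2[OF Phi_deriv])

lemma Phi_cont: "continuous_on S Phi"
  by (meson DERIV_isCont Phi_deriv continuous_at_imp_continuous_on)

lemma Phi_strict_mono: "x < y \<Longrightarrow> Phi x < Phi y"
  by (rule DERIV_pos_imp_increasing_open[OF _ _ Phi_cont]) (auto intro: Phi_deriv phi_pos)

lemma Phi_nonneg: "0 \<le> Phi x"
  unfolding Phi_def set_lebesgue_integral_def by (rule Bochner_Integration.integral_nonneg) (auto simp: indicator_def)

lemma Phi_pos: "0 < Phi x"
  using Phi_strict_mono[of "x-1" x] Phi_nonneg[of "x-1"] by simp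

lemma Phi_nz: "Phi x \<noteq> 0" using Phi_pos[of x] by simp

lemma u_deriv: "(u has_real_derivative (2*C*Phi(-C))) (at C)"
  unfolding u_def
  by (auto intro!: derivative_eq_intros simp: std_normal_density_def field_simps power2_eq_square)

lemma v_deriv: "(v has_real_derivative (phi C * u C / (Phi(-C))^2)) (at C)"
proof -
  have p: "Phi (-C) \<noteq> 0" using Phi_pos[of "-C"] by simp
  have q: "Phi C = 1 - Phi (-C)" using Phi_neg[of C] by simp
  show ?thesis
    unfolding v_def u_def
    using p by (auto intro!: derivative_eq_intros simp: q std_normal_density_def field_simps power2_eq_square)
qed

definition hfun :: "real \<Rightarrow> real" where
  "hfun B = (1 - B\<^sup>2) * Phi B - B * phi B"

lemma hfun_deriv: "(hfun has_real_derivative (-2*B*Phi B)) (at B)"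
  unfolding hfun_def
  by (auto intro!: derivative_eq_intros simp: std_normal_density_def field_simps power2_eq_square)

lemma hfun_cont: "continuous_on S hfun"
  by (meson DERIV_isCont hfun_deriv continuous_at_imp_continuous_on)

lemma hfun_eqv: "(sqrt (2*pi) * (1 - B\<^sup>2) * exp (B\<^sup>2 / 2) * Phi B = B) \<longleftrightarrow> hfun B = 0"
proof -
  define E where "E = sqrt (2*pi) * exp (B\<^sup>2 / 2)"
  have E: "E > 0" unfolding E_def by simp
  have Ep: "E * phi B = 1"
    unfolding E_def std_normal_density_def by (simp add: exp_minus field_simps)
  have "sqrt (2*pi) * (1 - B\<^sup>2) * exp (B\<^sup>2 / 2) * Phi B = E * ((1 - B\<^sup>2) * Phi B)"
    unfolding E_def by simp
  moreover have "B = E * (B * phi B)" using Ep by (simp add: algebra_simps)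
  ultimately have "(sqrt (2*pi) * (1 - B\<^sup>2) * exp (B\<^sup>2 / 2) * Phi B = B) \<longleftrightarrow>
      E * ((1 - B\<^sup>2) * Phi B) = E * (B * phi B)" by metis
  also have "\<dots> \<longleftrightarrow> hfun B = 0" using E unfolding hfun_def by simp
  finally show ?thesis .
qed

lemma Bstar_props: "Bstar > 0 \<and> hfun Bstar = 0"
proof -
  have h0: "hfun 0 = 1/2" unfolding hfun_def by (simp add: Phi_0)
  have h1: "hfun 1 < 0" unfolding hfun_def using phi_pos[of 1] by simp
  obtain x where x: "0 \<le> x" "x \<le> 1" "hfun x = 0"
    using IVT2'[of hfun 1 0 0, OF _ _ _ hfun_cont] h0 h1 by auto
  have xpos: "x > 0" using x h0 by (cases "x = 0") auto
  have uniq: "y = x" if "y > 0" "hfun y = 0" for y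
  proof (rule ccontr)
    assume ne: "y \<noteq> x"
    have dec: "hfun b < hfun a" if "0 < a" "a < b" for a b
      by (rule DERIV_neg_imp_decreasing_open[OF that(2) _ hfun_cont])
         (use that Phi_pos in \<open>auto intro!: exI hfun_deriv\<close>)
    show False
      using ne dec[of x y] dec[of y x] xpos that x(3) by (cases "x < y") auto
  qed
  have "Bstar = x"
    unfolding Bstar_def
  proof (rule the_equality)
    show "x > 0 \<and> sqrt (2*pi) * (1 - x\<^sup>2) * exp (x\<^sup>2 / 2) * Phi x = x"
      using xpos x(3) hfun_eqv by simp
  next
    fix y assume "y > 0 \<and> sqrt (2*pi) * (1 - y\<^sup>2) * exp (y\<^sup>2 / 2) * Phi y = y"
    then show "y = x" using uniq hfun_eqv by auto
  qed
  then show ?thesis using xpos x by simp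
qed

lemma u_cont: "continuous_on S u"
  by (meson DERIV_isCont u_deriv continuous_at_imp_continuous_on)

lemma v_cont: "continuous_on S v"
  by (meson DERIV_isCont v_deriv continuous_at_imp_continuous_on)

lemma u_dec: "a < c \<Longrightarrow> c \<le> 0 \<Longrightarrow> u c < u a"
  by (rule DERIV_neg_imp_decreasing_open[OF _ _ u_cont])
     (use Phi_pos in \<open>auto intro!: exI u_deriv simp: mult_neg_pos\<close>)

lemma u_inc: "0 \<le> a \<Longrightarrow> a < c \<Longrightarrow> u a < u c"
  by (rule DERIV_pos_imp_increasing_open[OF _ _ u_cont])
     (use Phi_pos in \<open>auto intro!: exI u_deriv\<close>)

theorem lemma3p1:
  shows "\<exists>Cs. Cs < 0 \<and> u Cs = 0 \<and> (\<forall>C. C < 0 \<and> u C = 0 \<longrightarrow> C = Cs)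
          \<and> Cs \<le> Bstar \<and> (\<forall>C. C \<le> Bstar \<and> C \<noteq> Cs \<longrightarrow> v C < v Cs)"
proof -
  have Bpos: "Bstar > 0" and hB: "hfun Bstar = 0" using Bstar_props by auto
  have "(1 - Bstar\<^sup>2) * Phi Bstar > 0"
    using hB phi_pos[of Bstar] Bpos unfolding hfun_def by simp
  then have bpos: "1 - Bstar\<^sup>2 > 0" using Phi_pos[of Bstar] by (simp add: zero_less_mult_iff)
  have uB: "u Bstar = 0"
    using hB unfolding u_def hfun_def Phi_neg std_normal_density_def by (simp add: algebra_simps)
  have um2: "u (-2) > 0"
    unfolding u_def using bpos Phi_pos[of 2] by (simp add: add_pos_pos)
  have u0: "u 0 < 0" using u_inc[of 0 Bstar] Bpos uB by simp
  obtain Cs where Cs: "-2 \<le> Cs" "Cs \<le> 0" "u Cs = 0"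
    using IVT2'[of u 0 0 "-2", OF _ _ _ u_cont] um2 u0 by auto
  have Csneg: "Cs < 0" using Cs u0 by (cases "Cs = 0") auto
  have uniq: "\<forall>C. C < 0 \<and> u C = 0 \<longrightarrow> C = Cs"
  proof (intro allI impI)
    fix C assume C: "C < 0 \<and> u C = 0"
    show "C = Cs"
      using u_dec[of C Cs] u_dec[of Cs C] C Cs Csneg by (cases "C < Cs"; cases "Cs < C") auto
  qed
  have upos: "u x > 0" if "x < Cs" for x using u_dec[of x Cs] that Cs Csneg by simp
  have uneg: "u x < 0" if "Cs < x" "x < Bstar" for x
  proof (cases "x \<le> 0")
    case True then show ?thesis using u_dec[of Cs x] that Cs by simp
  next
    case False then show ?thesis using u_inc[of x Bstar] that uB by simp
  qed
  have vmax: "v C < v Cs" if "C \<le> Bstar" "C \<noteq> Cs" for C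
  proof (cases "C < Cs")
    case True
    show ?thesis
    proof (rule DERIV_pos_imp_increasing_open[OF True _ v_cont])
      fix x assume x: "C < x" "x < Cs"
      have "phi x * u x > 0" using phi_pos[of x] upos[of x] x by simp
      moreover have "(Phi (-x))^2 > 0" using Phi_pos[of "-x"] by simp
      ultimately show "\<exists>y. DERIV v x :> y \<and> y > 0"
        using v_deriv[of x] by (intro exI[of _ "phi x * u x / (Phi(-x))^2"]) simp
    qed
  next
    case False
    then have lt: "Cs < C" using that by simp
    show ?thesis
    proof (rule DERIV_neg_imp_decreasing_open[OF lt _ v_cont])
      fix x assume x: "Cs < x" "x < C"
      have "phi x * u x < 0" using phi_pos[of x] uneg[of x] x that by (simp add: mult_pos_neg)
      moreover have "(Phi (-x))^2 > 0" using Phi_pos[of "-x"] by simp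
      ultimately show "\<exists>y. DERIV v x :> y \<and> y < 0"
        using v_deriv[of x] by (intro exI[of _ "phi x * u x / (Phi(-x))^2"]) (simp add: divide_neg_pos)
    qed
  qed
  have CB: "Cs \<le> Bstar" using Csneg Bpos by simp
  show ?thesis
    using Csneg Cs(3) uniq vmax CB by blast
qed

end
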